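(* For every positive integer $n$ there exists a bijection $\phi:\mathcal{H}_n\to\mathcal{H}_n$ such that $\mathrm{rep}(\lambda)=\mathrm{even}(\phi(\lambda))$ for every $\lambda\in\mathcal{H}_n$.
   Context: A partition is a finite nonempty weakly decreasing sequence $\lambda=(\lambda_1,\ldots,\lambda_k)$ of positive integers; $\ell(\lambda)=k$. The perimeter is $\Gamma(\lambda)=\lambda_1+\ell(\lambda)-1$; $\mathcal{H}_n$ is the set of partitions with perimeter $n$. $\mathrm{rep}(\lambda)=|\{1\le i\le \ell(\lambda)-1:\lambda_i=\lambda_{i+1}\}|$ and $\mathrm{even}(\lambda)=|\{1\le i\le\ell(\lambda):\lambda_i\text{ even}\}|$. *)

theory Defs
  imports Main
begin

definition is_partition :: "nat list \<Rightarrow> bool" where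
  "is_partition p \<longleftrightarrow> p \<noteq> [] \<and> sorted_wrt (\<ge>) p \<and> (\<forall>x\<in>set  p. 0 < x)"

definition perimeter :: "nat list \<Rightarrow> nat" where
  "perimeter p = hd p + length p - 1"

definition H :: "nat \<Rightarrow> nat list set" where
  "H n = { p. is_partition p \<and> perimeter p = n}"

definition rep :: "nat list \<Rightarrow> nat" where
  "rep p = card {i. i + 1 < length p \<and> p ! i = p ! (i + 1)}"

definition even_parts :: "nat list \<Rightarrow> nat" where
  "even_parts p = card {i. i < length p \<and> even (p ! i)}"

end

theory Submission
  imports Defs
begin

definition Dop :: "nat list \<Rightarrow> nat list" where "Dop q = hd q # q"
definition Iop :: "nat list \<Rightarrow> nat list" where "Iop q = Suc (hd q) # tl q"
definition Dform :: "nat list \<Rightarrow> bool" where "Dform q \<longleftrightarrow> 2 \<le> length q \<and> q ! 0 = q ! 1"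

function phi :: "nat list \<Rightarrow> nat list" where
  "phi [] = []"
| "phi (x # r) = (if r \<noteq> [] \<and> x = hd r then (let s = phi r in if Dform r then Dop s else Iop s)
     else if 2 \<le> x then (let s = phi ((x - 1) # r) in if Dform ((x - 1) # r) then Iop s else Dop s)
     else x # r)"
  by pat_completeness auto
termination
  by (relation "measure (\<lambda>q. hd q + length q)") auto

declare phi.simps(2)[simp del]

lemma even_parts_Cons: "even_parts (x # r) = (if even x then 1 else 0) + even_parts r"
proof -
  have e: "{i. i < length (x # r) \<and> even ((x # r) ! i)} =
     (if even x then {0} else {}) \<union> Suc ` {i. i < length r \<and> even (r ! i)}"
    apply (auto simp: image_iff)
    apply (case_tac xa; auto)+
    done
  have f: "finite {i. i < length r \<and> even (r ! i)}" by simp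
  show ?thesis unfolding even_parts_def e using f
    by (auto simp: card_image)
qed

lemma rep_single: "rep [x] = 0"
  unfolding rep_def by simp

lemma rep_Cons2: "rep (x # y # r) = (if x = y then 1 else 0) + rep (y # r)"
proof -
  have e: "{i. i + 1 < length (x # y # r) \<and> (x # y # r) ! i = (x # y # r) ! (i + 1)} =
     (if x = y then {0} else {}) \<union> Suc ` {i. i + 1 < length (y # r) \<and> (y # r) ! i = (y # r) ! (i + 1)}"
    apply (auto simp: image_iff)
    apply (case_tac xa; auto)+
    done
  have f: "finite {i. i + 1 < length (y # r) \<and> (y # r) ! i = (y # r) ! (i + 1)}"
    by (rule finite_subset[of _ "{..<length (y#r)}"]) auto
  show ?thesis unfolding rep_def e using f
    by (auto simp: card_image)
qed


lemma H_mem: "q \<in> H n \<longleftrightarrow> q \<noteq> [] \<and> sorted_wrt (\<ge>) q \<and> (\<forall>x\<in>set q. 0 < x) \<and> hd q + length q - 1 = n"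
  by (simp add: H_def is_partition_def perimeter_def)

lemma H1: "H (Suc 0) = {[1]}"
proof -
  have "q \<in> H (Suc 0) \<longleftrightarrow> q = [1]" for q
    apply (cases q)
     apply (auto simp: H_mem)
    subgoal for a l by (cases l) auto
    done
  then show ?thesis by blast
qed

lemma Dop_H: "q \<in> H n \<Longrightarrow> Dop q \<in> H (Suc n)"
  by (cases q) (auto simp: H_mem Dop_def)

lemma Iop_H: "q \<in> H n \<Longrightarrow> Iop q \<in> H (Suc n)"
  by (cases q) (auto simp: H_mem Iop_def)

lemma H_Suc_cases:
  assumes "q \<in> H (Suc n)" "0 < n"
  obtains p where "p \<in> H n" "q = Dop p" | p where "p \<in> H n" "q = Iop p"
proof (cases q)
  case Nil then show ?thesis using assms by (simp add: H_mem)
next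
  case (Cons x r)
  show ?thesis
  proof (cases "r \<noteq> [] \<and> x = hd r")
    case True
    then have "r \<in> H n" "q = Dop r" using assms Cons by (auto simp: H_mem Dop_def)
    then show ?thesis using that by blast
  next
    case False
    have x2: "2 \<le> x"
    proof (cases r)
      case Nil then show ?thesis using assms Cons by (auto simp: H_mem)
    next
      case (Cons y r')
      then have "y \<le> x" "0 < y" using assms \<open>q = x # r\<close> by (auto simp: H_mem)
      then show ?thesis using False Cons by auto
    qed
    have lt: "\<forall>z\<in>set r. z < x"
    proof (cases r)
      case (Cons y r')
      then have "y \<le> x" "\<forall>z\<in>set r'. z \<le> y" using assms \<open>q = x # r\<close> by (auto simp: H_mem)
      then show ?thesis using False Cons by fastforce
    qed simp
    then have "(x - 1) # r \<in> H n" "q = Iop ((x - 1) # r)" using assms Cons x2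
      by (auto simp: H_mem Iop_def)
    then show ?thesis using that by blast
  qed
qed

lemma phi_Dop: "q \<in> H n \<Longrightarrow> phi (Dop q) = (if Dform q then Dop (phi q) else Iop (phi q))"
  by (cases q) (auto simp: H_mem Dop_def Let_def phi.simps(2)[of _ "_ # _"])

lemma phi_Iop: "q \<in> H n \<Longrightarrow> phi (Iop q) = (if Dform q then Iop (phi q) else Dop (phi q))"
proof (cases q)
  case (Cons x r)
  assume q: "q \<in> H n"
  have "\<not> (r \<noteq> [] \<and> Suc x = hd r)" using q Cons by (cases r) (auto simp: H_mem)
  moreover have "0 < x" using q Cons by (auto simp: H_mem)
  ultimately show ?thesis using Cons by (auto simp: Iop_def Let_def phi.simps(2)[of "Suc _"])
qed (auto simp: H_mem)

lemma main:
  "0 < n \<Longrightarrow> q \<in> H n \<Longrightarrow> phi q \<in> H n \<and> rep q = even_parts (phi q) \<and> (even (hd (phi q)) \<longleftrightarrow> Dform q)"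
proof (induction n arbitrary: q rule: nat_induct_non_zero)
  case 1
  then show ?case by (simp add: H1 rep_single even_parts_Cons Dform_def phi.simps, simp add: even_parts_def)
next
  case (Suc n)
  from Suc.prems Suc.hyps show ?case
  proof (cases rule: H_Suc_cases)
    case (1 p)
    from Suc.IH[OF 1(1)] have ih: "phi p \<in> H n" "rep p = even_parts (phi p)"
      "even (hd (phi p)) \<longleftrightarrow> Dform p" by auto
    obtain x r where p: "p = x # r" using 1(1) by (cases p) (auto simp: H_mem)
    obtain y s where s: "phi p = y # s" using ih(1) by (cases "phi p") (auto simp: H_mem)
    have rq: "rep q = 1 + rep p" using 1 p by (simp add: Dop_def rep_Cons2)
    have pq: "phi q = (if Dform p then Dop (phi p) else Iop (phi p))" using phi_Dop[OF 1(1)] 1(2) by simp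
    have dq: "Dform q" using 1(2) p by (simp add: Dop_def Dform_def)
    have hq: "phi q \<in> H (Suc n)" using pq Dop_H[OF ih(1)] Iop_H[OF ih(1)] by simp
    show ?thesis
    proof (cases "Dform p")
      case True
      then show ?thesis using ih rq dq hq pq s by (simp add: even_parts_Cons Dop_def)
    next
      case False
      then show ?thesis using ih rq dq hq pq s by (simp add: even_parts_Cons Iop_def)
    qed
  next
    case (2 p)
    from Suc.IH[OF 2(1)] have ih: "phi p \<in> H n" "rep p = even_parts (phi p)"
      "even (hd (phi p)) \<longleftrightarrow> Dform p" by auto
    obtain x r where p: "p = x # r" using 2(1) by (cases p) (auto simp: H_mem)
    obtain y s where s: "phi p = y # s" using ih(1) by (cases "phi p") (auto simp: H_mem)
    have rq: "rep p = rep q + (if Dform p then 1 else 0)"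
    proof (cases r)
      case Nil then show ?thesis using 2 p by (simp add: Iop_def rep_single Dform_def)
    next
      case (Cons z r')
      have "z \<le> x" using 2(1) p Cons by (auto simp: H_mem)
      then show ?thesis using 2 p Cons by (simp add: Iop_def rep_Cons2 Dform_def)
    qed
    have nd: "\<not> Dform q"
    proof (cases r)
      case Nil then show ?thesis using 2 p by (simp add: Iop_def Dform_def)
    next
      case (Cons z r')
      have "z \<le> x" using 2(1) p Cons by (auto simp: H_mem)
      then show ?thesis using 2 p Cons by (simp add: Iop_def Dform_def)
    qed
    have pq: "phi q = (if Dform p then Iop (phi p) else Dop (phi p))" using phi_Iop[OF 2(1)] 2(2) by simp
    have hq: "phi q \<in> H (Suc n)" using pq Dop_H[OF ih(1)] Iop_H[OF ih(1)] by simp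
    show ?thesis
    proof (cases "Dform p")
      case True
      then show ?thesis using ih rq nd hq pq s by (simp add: even_parts_Cons Iop_def)
    next
      case False
      then show ?thesis using ih rq nd hq pq s by (simp add: even_parts_Cons Dop_def)
    qed
  qed
qed


lemma DI_ne: "a \<in> H m \<Longrightarrow> b \<in> H k \<Longrightarrow> Dop a \<noteq> Iop b"
proof
  assume a: "a \<in> H m" and b: "b \<in> H k" and e: "Dop a = Iop b"
  then have "a = tl b" "hd a = Suc (hd b)" by (auto simp: Dop_def Iop_def)
  moreover obtain x r where "b = x # r" using b by (cases b) (auto simp: H_mem)
  moreover have "a \<noteq> []" using a by (auto simp: H_mem)
  ultimately show False using b by (cases r) (auto simp: H_mem)
qed

lemma Dop_inj: "Dop a = Dop b \<Longrightarrow> a = b"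
  by (simp add: Dop_def)

lemma Iop_inj: "a \<in> H m \<Longrightarrow> b \<in> H k \<Longrightarrow> Iop a = Iop b \<Longrightarrow> a = b"
  by (cases a; cases b) (auto simp: Iop_def H_mem)

lemma inj_main:
  "0 < n \<Longrightarrow> q1 \<in> H n \<Longrightarrow> q2 \<in> H n \<Longrightarrow> phi q1 = phi q2 \<Longrightarrow> q1 = q2"
proof (induction n arbitrary: q1 q2 rule: nat_induct_non_zero)
  case 1
  then show ?case by (simp add: H1)
next
  case (Suc n)
  have key: "phi p1 = phi p2 \<Longrightarrow> p1 = p2" if "p1 \<in> H n" "p2 \<in> H n" for p1 p2
    using Suc.IH that by blast
  from Suc.prems(1) Suc.hyps show ?case
  proof (cases rule: H_Suc_cases)
    case (1 p1)
    note h1 = main[OF Suc.hyps 1(1)]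
    have pq1: "phi q1 = (if Dform p1 then Dop (phi p1) else Iop (phi p1))" using phi_Dop[OF 1(1)] 1(2) by simp
    from Suc.prems(2) Suc.hyps show ?thesis
    proof (cases rule: H_Suc_cases)
      case (1 p2)
      have pq2: "phi q2 = (if Dform p2 then Dop (phi p2) else Iop (phi p2))" using phi_Dop[OF 1(1)] 1(2) by simp
      show ?thesis using pq1 pq2 Suc.prems(3) DI_ne[of "phi p1" n "phi p2" n] DI_ne[of "phi p2" n "phi p1" n]
        key[of p1 p2] Iop_inj[of "phi p1" n "phi p2" n] Dop_inj[of "phi p1" "phi p2"] h1 main[OF Suc.hyps 1(1)] 1 \<open>p1 \<in> H n\<close> \<open>q1 = Dop p1\<close>
        by (auto split: if_splits)
    next
      case (2 p2)
      have pq2: "phi q2 = (if Dform p2 then Iop (phi p2) else Dop (phi p2))" using phi_Iop[OF 2(1)] 2(2) by simp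
      show ?thesis using pq1 pq2 Suc.prems(3) DI_ne[of "phi p1" n "phi p2" n] DI_ne[of "phi p2" n "phi p1" n]
        key[of p1 p2] Iop_inj[of "phi p1" n "phi p2" n] Dop_inj[of "phi p1" "phi p2"] h1 main[OF Suc.hyps 2(1)] 2 \<open>p1 \<in> H n\<close> \<open>q1 = Dop p1\<close>
        by (auto split: if_splits)
    qed
  next
    case (2 p1)
    note h1 = main[OF Suc.hyps 2(1)]
    have pq1: "phi q1 = (if Dform p1 then Iop (phi p1) else Dop (phi p1))" using phi_Iop[OF 2(1)] 2(2) by simp
    from Suc.prems(2) Suc.hyps show ?thesis
    proof (cases rule: H_Suc_cases)
      case (1 p2)
      have pq2: "phi q2 = (if Dform p2 then Dop (phi p2) else Iop (phi p2))" using phi_Dop[OF 1(1)] 1(2) by simp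
      show ?thesis using pq1 pq2 Suc.prems(3) DI_ne[of "phi p1" n "phi p2" n] DI_ne[of "phi p2" n "phi p1" n]
        key[of p1 p2] Iop_inj[of "phi p1" n "phi p2" n] Dop_inj[of "phi p1" "phi p2"] h1 main[OF Suc.hyps 1(1)] 1 \<open>p1 \<in> H n\<close> \<open>q1 = Iop p1\<close>
        by (auto split: if_splits)
    next
      case (2 p2)
      have pq2: "phi q2 = (if Dform p2 then Iop (phi p2) else Dop (phi p2))" using phi_Iop[OF 2(1)] 2(2) by simp
      show ?thesis using pq1 pq2 Suc.prems(3) DI_ne[of "phi p1" n "phi p2" n] DI_ne[of "phi p2" n "phi p1" n]
        key[of p1 p2] Iop_inj[of "phi p1" n "phi p2" n] Dop_inj[of "phi p1" "phi p2"] h1 main[OF Suc.hyps 2(1)] 2 \<open>p1 \<in> H n\<close> \<open>q1 = Iop p1\<close>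
        by (auto split: if_splits)
    qed
  qed
qed

lemma finite_H: "finite (H n)"
proof (rule finite_subset)
  show "H n \<subseteq> {xs. set xs \<subseteq> {..n} \<and> length xs \<le> n}"
  proof
    fix q assume q: "q \<in> H n"
    then obtain x r where qx: "q = x # r" by (cases q) (auto simp: H_mem)
    have "\<forall>z\<in>set q. z \<le> x" using q qx by (auto simp: H_mem)
    moreover have "0 < x" using q qx by (auto simp: H_mem)
    ultimately show "q \<in> {xs. set xs \<subseteq> {..n} \<and> length xs \<le> n}" using q qx by (auto simp: H_mem)
  qed
  show "finite {xs. set xs \<subseteq> {..n::nat} \<and> length xs \<le> n}"
    by (rule finite_lists_length_le) simp
qed

theorem theorem2p7:
  fixes n :: nat
  assumes "0 < n"
  shows "\<exists>\<phi>. bij_betw \<phi> (H n) (H n) \<and> (\<forall>p\<in>H n. rep p = even_parts (\<phi> p))"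
proof (intro exI conjI)
  have inj: "inj_on phi (H n)" using inj_main[OF assms] by (meson inj_onI)
  have sub: "phi ` H n \<subseteq> H n" using main[OF assms] by blast
  show "bij_betw phi (H n) (H n)"
    unfolding bij_betw_def using inj endo_inj_surj[OF finite_H sub inj] by simp
  show "\<forall>p\<in>H n. rep p = even_parts (phi p)" using main[OF assms] by blast
qed

end
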